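(* Let $A \in SL(2,\mathbb{Z})$. Then for every $k \geq 1$ there is an integer $1 \leq d \leq 6^k$ such that \[ I + A + A^2 + \cdots + A^{d-1} \equiv 0 \mod 3^k, \] where $I$ is the identity matrix and the congruence is entrywise. *)

theory Defs
  imports "HOL-Analysis.Analysis"
begin

fun mat_power :: "'a::comm_ring_1^'n^'n \<Rightarrow> nat \<Rightarrow> 'a^'n^'n" where
  "mat_power A 0 = mat 1"
| "mat_power A (Suc n) = A ** mat_power A n"

end

theory Submission
  imports Defs
begin

definition D :: "nat \<Rightarrow> int^2^2 \<Rightarrow> bool" where
  "D j M \<longleftrightarrow> (\<forall>i k. (3::int)^j dvd M $ i $ k)"

abbreviation S :: "int^2^2 \<Rightarrow> nat \<Rightarrow> int^2^2" where
  "S A d \<equiv> (\<Sum>m<d. mat_power A m)"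

lemma matrix_add_rdistrib': "((B + C) ** A) = (B ** A) + (C ** A)"
  by (vector matrix_matrix_mult_def sum.distrib[symmetric] field_simps)

lemma D_add: "D j M \<Longrightarrow> D j N \<Longrightarrow> D j (M + N)"
  by (simp add: D_def)

lemma D_mono: "D a M \<Longrightarrow> b \<le> a \<Longrightarrow> D b M"
  unfolding D_def by (meson dvd_trans le_imp_power_dvd)

lemma D_mult: "D a M \<Longrightarrow> D b N \<Longrightarrow> D (a+b) (M ** N)"
  unfolding D_def matrix_matrix_mult_def
  by (auto simp: power_add intro!: dvd_sum mult_dvd_mono)

lemma D_multL: "D b N \<Longrightarrow> D b (M ** N)"
  using D_mult[of 0 M b N] by (simp add: D_def)

lemma D_diff: "D j M \<Longrightarrow> D j N \<Longrightarrow> D j (M - N)"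
  by (simp add: D_def)

lemma D_three: "D j M \<Longrightarrow> D (Suc j) (M + M + M)"
proof -
  assume "D j M"
  then show ?thesis unfolding D_def
  proof (intro allI)
    fix i k
    assume h: "\<forall>i k. (3::int) ^ j dvd M $ i $ k"
    have "(M + M + M) $ i $ k = 3 * M $ i $ k" by simp
    then show "(3::int) ^ Suc j dvd (M + M + M) $ i $ k"
      using h by (simp add: mult_dvd_mono)
  qed
qed

lemma mp_add: "mat_power A (m+n) = mat_power A m ** mat_power A n"
  by (induction m) (auto simp: matrix_mul_assoc)

lemma S_add: "S A (d+n) = S A d + mat_power A d ** S A n"
proof (induction n)
  case 0 then show ?case by simp
next
  case (Suc n)
  have "S A (d + Suc n) = S A (d+n) + mat_power A (d+n)" by simp
  also have "\<dots> = S A d + mat_power A d ** (S A n + mat_power A n)"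
    using Suc by (simp add: mp_add matrix_add_ldistrib add.assoc)
  finally show ?case by simp
qed

lemma S_Suc: "S A (Suc d) = mat 1 + A ** S A d"
proof (induction d)
  case 0 then show ?case by simp
next
  case (Suc d)
  have "S A (Suc (Suc d)) = S A (Suc d) + mat_power A (Suc d)" by simp
  also have "\<dots> = mat 1 + A ** S A d + A ** mat_power A d"
    using Suc by simp
  also have "\<dots> = mat 1 + A ** (S A d + mat_power A d)"
    by (simp only: matrix_add_ldistrib add.assoc)
  also have "S A d + mat_power A d = S A (Suc d)" by simp
  finally show ?case .
qed

lemma step:
  assumes "D j (S A d)" "j \<ge> 1"
  shows "D (Suc j) (S A (3*d))"
proof -
  define E where "E = A ** S A d - S A d"
  have P: "mat_power A d = mat 1 + E"
    using S_Suc[of A d] by (simp add: E_def algebra_simps)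
  have DE: "D j E" unfolding E_def using assms by (intro D_diff D_multL)
  have "3*d = d + (d + d)" by simp
  then have "S A (3*d) = S A (d + (d + d))" by (simp only:)
  also have "\<dots> = S A d + (S A d + S A d + E ** S A d) + E ** (S A d + S A d + E ** S A d)"
    by (simp add: S_add P matrix_add_rdistrib' matrix_add_ldistrib algebra_simps)
  finally have eq: "S A (3*d) = (S A d + S A d + S A d) + (E ** S A d + E ** (S A d + S A d + E ** S A d))"
    by (simp add: algebra_simps)
  have "D (j + j) (E ** S A d)" by (rule D_mult[OF DE assms(1)])
  then have d1: "D (Suc j) (E ** S A d)" using assms(2) D_mono by fastforce
  have "D j (S A d + S A d + E ** S A d)"
    using assms(1) d1 D_mono by (meson D_add le_SucI order_refl)
  then have "D (j + j) (E ** (S A d + S A d + E ** S A d))" by (rule D_mult[OF DE])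
  then have d2: "D (Suc j) (E ** (S A d + S A d + E ** S A d))" using assms(2) D_mono by fastforce
  show ?thesis unfolding eq by (intro D_add[OF D_three[OF assms(1)]] D_add[OF d1 d2])
qed


fun cf :: "int \<Rightarrow> nat \<Rightarrow> int \<times> int" where
  "cf t 0 = (0, 1)"
| "cf t (Suc m) = (t * fst (cf t m) + snd (cf t m), - fst (cf t m))"

lemma CH:
  fixes A :: "int^2^2"
  assumes "det A = 1"
  shows "(A ** A) $ i $ k = (A$1$1 + A$2$2) * A$i$k - mat 1 $ i $ k"
proof -
  have d: "A$1$1 * A$2$2 - A$1$2 * A$2$1 = 1" using assms by (simp add: det_2)
  show ?thesis
    using exhaust_2[of i] exhaust_2[of k] d
    by (auto simp: matrix_matrix_mult_def sum_2 mat_def algebra_simps)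
qed

lemma coef:
  fixes A :: "int^2^2"
  assumes "det A = 1"
  shows "mat_power A m $ i $ k = fst (cf (A$1$1 + A$2$2) m) * A$i$k + snd (cf (A$1$1 + A$2$2) m) * mat 1 $ i $ k"
proof (induction m arbitrary: i k)
  case 0 then show ?case by simp
next
  case (Suc m)
  define t where "t = A$1$1 + A$2$2"
  define x where "x = fst (cf t m)"
  define y where "y = snd (cf t m)"
  have IH: "\<And>l. mat_power A m $ l $ k = x * A$l$k + y * mat 1 $ l $ k"
    using Suc unfolding x_def y_def t_def by simp
  have "mat_power A (Suc m) $ i $ k = (\<Sum>l\<in>UNIV. A$i$l * mat_power A m $ l $ k)"
    by (simp add: matrix_matrix_mult_def)
  also have "\<dots> = x * (\<Sum>l\<in>UNIV. A$i$l * A$l$k) + y * (\<Sum>l\<in>UNIV. A$i$l * mat 1 $ l $ k)"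
    by (simp add: IH sum_distrib_left sum.distrib algebra_simps)
  also have "(\<Sum>l\<in>UNIV. A$i$l * A$l$k) = (A ** A) $ i $ k"
    by (simp add: matrix_matrix_mult_def)
  also have "(\<Sum>l\<in>UNIV. A$i$l * mat 1 $ l $ k) = (A ** mat 1) $ i $ k"
    by (simp add: matrix_matrix_mult_def)
  finally show ?case using CH[OF assms, of i k]
    by (simp add: x_def y_def t_def algebra_simps)
qed

lemma coefS:
  fixes A :: "int^2^2"
  assumes "det A = 1"
  shows "S A d $ i $ k = (\<Sum>m<d. fst (cf (A$1$1 + A$2$2) m)) * A$i$k + (\<Sum>m<d. snd (cf (A$1$1 + A$2$2) m)) * mat 1 $ i $ k"
  by (induction d) (simp_all add: coef[OF assms] algebra_simps)

lemma base:
  fixes A :: "int^2^2"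
  assumes "det A = 1"
  shows "\<exists>d. 1 \<le> d \<and> d \<le> 6 \<and> D 1 (S A d)"
proof -
  define t where "t = A$1$1 + A$2$2"
  have suff: "D 1 (S A d)" if "3 dvd (\<Sum>m<d. fst (cf t m))" "3 dvd (\<Sum>m<d. snd (cf t m))" for d
    unfolding D_def
  proof (intro allI)
    fix i k
    show "(3::int) ^ 1 dvd S A d $ i $ k"
      unfolding coefS[OF assms] t_def[symmetric] using that by simp
  qed
  have "t mod 3 = 0 \<or> t mod 3 = 1 \<or> t mod 3 = 2" by auto
  then show ?thesis
  proof (elim disjE)
    assume h: "t mod 3 = 0"
    then have t3: "3 dvd t" by presburger
    have "D 1 (S A 4)"
      by (rule suff) (simp_all add: eval_nat_numeral t3 dvd_add dvd_mult2)
    then show ?thesis by (intro exI[of _ 4]) simp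
  next
    assume h: "t mod 3 = 1"
    then obtain q where tq: "t = 3*q+1" by (metis mult.commute div_mult_mod_eq add.commute)
    have "D 1 (S A 6)"
      apply (rule suff)
       apply (simp_all add: tq eval_nat_numeral algebra_simps power_numeral_reduce)
      done
    then show ?thesis by (intro exI[of _ 6]) simp
  next
    assume h: "t mod 3 = 2"
    then obtain q where tq: "t = 3*q+2" by (metis mult.commute div_mult_mod_eq add.commute)
    have "D 1 (S A 3)"
      by (rule suff) (simp_all add: tq eval_nat_numeral algebra_simps dvd_eq_mod_eq_0 power_numeral_reduce)
    then show ?thesis by (intro exI[of _ 3]) simp
  qed
qed


lemma main_aux:
  fixes A :: "int^2^2"
  assumes "det A = 1"
  shows "\<exists>d. 1 \<le> d \<and> d \<le> 6 * 3 ^ k \<and> D (Suc k) (S A d)"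
proof (induction k)
  case 0 then show ?case using base[OF assms] by simp
next
  case (Suc k)
  then obtain d where d: "1 \<le> d" "d \<le> 6 * 3 ^ k" "D (Suc k) (S A d)" by blast
  have "D (Suc (Suc k)) (S A (3*d))" by (rule step[OF d(3)]) simp
  moreover have "1 \<le> 3*d" "3*d \<le> 6 * 3 ^ Suc k" using d by auto
  ultimately show ?case by blast
qed

theorem lemma5p30:
  fixes A :: "int^2^2" and k :: nat
  assumes "det A = 1" and "k \<ge> 1"
  shows "\<exists>d::nat. 1 \<le> d \<and> d \<le> 6 ^ k \<and>
           (\<forall>i j. (3::int) ^ k dvd (\<Sum>m<d. mat_power A m) $ i $ j)"
proof -
  obtain k' where k: "k = Suc k'" using assms(2) by (cases k) auto
  obtain d where d: "1 \<le> d" "d \<le> 6 * 3 ^ k'" "D (Suc k') (S A d)"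
    using main_aux[OF assms(1)] by blast
  have "(3::nat) ^ k' \<le> 6 ^ k'" by (simp add: power_mono)
  then have "d \<le> 6 ^ k" using d(2) k by simp
  then show ?thesis using d(1,3) k unfolding D_def by blast
qed

end
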